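(* For $n\ge 0$ let $\mathcal P(n,1,1)$ be the set of lattice paths with steps $(1,1)$ (up) and $(1,-1)$ (down) from $(0,0)$ to $(2n+1,1)$, and let $C_n=\frac{1}{n+1}\binom{2n}{n}$. Define formal power series $f,g,h$ by: - $x\,f(x,y)$ is the sum over all $n\ge0$ and all paths in $\mathcal P(n,1,1)$ starting with an up step of $x^{a}y^{b}$, where $a$ is the number of up steps starting on or below the $x$-axis and $b$ the number of up steps starting above the $x$-axis; - $x\,g(x,y)$ is the sum over all $n\ge0$ and all paths in $\mathcal P(n,1,1)$ starting with a down step of $x^{a}y^{b}$, where $a$ is the number of down steps starting on or below the $x$-axis and $b$ the number of down steps starting above the $x$-axis; - $y\,h(x,y)$ is the sum over all $n\ge0$ and all paths in $\mathcal P(n,1,1)$ of $x^{a}y^{b}$, where, among all vertices except the initial vertex, $a$ is the number lying on or below the $x$-axis and $b$ the number lying above the $x$-axis. Then (1) $f(x,y)=\sum_{n\ge0}C_n\sum_{i=0}^{n}x^iy^{n-i}$; (2) $g(x,y)=\sum_{n\ge0}C_{n+1}\sum_{i=0}^{n}x^iy^{n-i}$; (3) $h(x,y)=\sum_{n\ge0}C_n\sum_{i=0}^{2n}x^iy^{2n-i}$.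
   Context: A step starts on or below (resp. above) the $x$-axis if its initial vertex has $y$-coordinate $\le 0$ (resp. $>0$); a vertex lies on or below (resp. above) the $x$-axis if its $y$-coordinate is $\le0$ (resp. $>0$). *)

theory Defs
  imports Main
begin

text \<open>A path is a list of steps: True = up step (1,1), False = down step (1,-1).
  The path starts at (0,0); step k (0-based) goes from vertex k to vertex k+1.\<close>

definition step_val :: "bool \<Rightarrow> int" where
  "step_val s = (if s then 1 else -1)"

definition height :: "bool list \<Rightarrow> nat \<Rightarrow> int" where
  "height p k = sum_list (map step_val (take k p))"

definition lattice_paths :: "nat \<Rightarrow> bool list set" where
  "lattice_paths n = {p. length p = 2 * n + 1 \<and> height p (length p) = 1}"

definition ups_below :: "bool list \<Rightarrow> nat" where
  "ups_below p = card {k. k < length p \<and> p ! k \<and> height p k \<le> 0}"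
definition ups_above :: "bool list \<Rightarrow> nat" where
  "ups_above p = card {k. k < length p \<and> p ! k \<and> height p k > 0}"

definition downs_below :: "bool list \<Rightarrow> nat" where
  "downs_below p = card {k. k < length p \<and> \<not> p ! k \<and> height p k \<le> 0}"
definition downs_above :: "bool list \<Rightarrow> nat" where
  "downs_above p = card {k. k < length p \<and> \<not> p ! k \<and> height p k > 0}"

definition verts_below :: "bool list \<Rightarrow> nat" where
  "verts_below p = card {k. 1 \<le> k \<and> k \<le> length p \<and> height p k \<le> 0}"
definition verts_above :: "bool list \<Rightarrow> nat" where
  "verts_above p = card {k. 1 \<le> k \<and> k \<le> length p \<and> height p k > 0}"

definition catalan :: "nat \<Rightarrow> nat" where
  "catalan n = (2 * n choose n) div (n + 1)"

text \<open>Coefficients of the bivariate formal power series f, g, h: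
  coeff_f i j is the coefficient of x^i y^j in f, i.e. the coefficient of
  x^(i+1) y^j in x f(x,y); similarly for g; coeff_h i j is the coefficient of
  x^i y^(j+1) in y h(x,y).\<close>
definition coeff_f :: "nat \<Rightarrow> nat \<Rightarrow> nat" where
  "coeff_f i j = card {p. (\<exists>n. p \<in> lattice_paths n) \<and> hd p
       \<and> ups_below p = Suc i \<and> ups_above p = j}"
definition coeff_g :: "nat \<Rightarrow> nat \<Rightarrow> nat" where
  "coeff_g i j = card {p. (\<exists>n. p \<in> lattice_paths n) \<and> \<not> hd p
       \<and> downs_below p = Suc i \<and> downs_above p = j}"
definition coeff_h :: "nat \<Rightarrow> nat \<Rightarrow> nat" where
  "coeff_h i j = card {p. (\<exists>n. p \<in> lattice_paths n)
       \<and> verts_below p = i \<and> verts_above p = Suc j}"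

end

theory Submission
  imports Defs
begin


definition prec :: "(nat \<Rightarrow> int) \<Rightarrow> nat \<Rightarrow> nat \<Rightarrow> bool" where
  "prec h m k \<longleftrightarrow> h m < h k \<or> (h m = h k \<and> k < m)"

lemma rank_bij:
  assumes "finite A"
  shows "bij_betw (\<lambda>k. card {m\<in>A. prec h m k}) A {..<card A}"
proof -
  let ?f = "\<lambda>k. card {m\<in>A. prec h m k}"
  have lt: "?f k1 < ?f k2" if "k1 \<in> A" "k2 \<in> A" "prec h k1 k2" for k1 k2
  proof -
    have "{m\<in>A. prec h m k1} \<subset> {m\<in>A. prec h m k2}"
      using that unfolding prec_def by auto
    thus ?thesis using assms by (intro psubset_card_mono) auto
  qed
  have inj: "inj_on ?f A"
  proof (rule inj_onI)
    fix x y assume "x \<in> A" "y \<in> A" "?f x = ?f y"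
    show "x = y"
    proof (rule ccontr)
      assume "x \<noteq> y"
      hence "prec h x y \<or> prec h y x" unfolding prec_def by auto
      thus False using lt[of x y] lt[of y x] \<open>x \<in> A\<close> \<open>y \<in> A\<close> \<open>?f x = ?f y\<close> by auto
    qed
  qed
  have sub: "?f ` A \<subseteq> {..<card A}"
  proof
    fix y assume "y \<in> ?f ` A"
    then obtain k where k: "k \<in> A" "y = ?f k" by auto
    have "{m\<in>A. prec h m k} \<subset> A" using k unfolding prec_def by auto
    thus "y \<in> {..<card A}" using k assms by (auto intro: psubset_card_mono)
  qed
  have "card (?f ` A) = card A" using inj by (simp add: card_image)
  hence "?f ` A = {..<card A}" using sub by (intro card_subset_eq) auto
  thus ?thesis using inj by (simp add: bij_betw_def)
qed

lemma card_fiber_one: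
  assumes "bij_betw f A B" "i \<in> B"
  shows "card {k\<in>A. f k = i} = 1"
proof -
  obtain a where a: "a \<in> A" "f a = i" using assms by (auto simp: bij_betw_def)
  have "{k\<in>A. f k = i} = {a}" using a assms(1) by (auto simp: bij_betw_def inj_on_def)
  thus ?thesis by simp
qed

lemma double_count:
  assumes fin: "finite S" and len: "\<And>p. p \<in> S \<Longrightarrow> length p = N" and N: "N > 0"
    and clo: "\<And>p k. p \<in> S \<Longrightarrow> rotate k p \<in> S"
    and one: "\<And>p. p \<in> S \<Longrightarrow> card {k. k < N \<and> P (rotate k p)} = 1"
  shows "card S = N * card {q\<in>S. P q}"
proof -
  define T where "T = (SIGMA p:S. {k. k < N \<and> P (rotate k p)})"
  have "card T = (\<Sum>p\<in>S. card {k. k < N \<and> P (rotate k p)})"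
    unfolding T_def using fin by (intro card_SigmaI) auto
  also have "\<dots> = card S" using one by simp
  finally have cT: "card T = card S" .
  have "bij_betw (\<lambda>(p,k). (rotate k p, k)) T ({q\<in>S. P q} \<times> {..<N})"
  proof (rule bij_betw_byWitness[where f' = "\<lambda>(q,k). (rotate (N - k) q, k)"])
    show "\<forall>a\<in>T. (\<lambda>(q, k). (rotate (N - k) q, k)) ((\<lambda>(p, k). (rotate k p, k)) a) = a"
      using len unfolding T_def by (auto simp: rotate_rotate)
    show "\<forall>a'\<in>{q \<in> S. P q} \<times> {..<N}. (\<lambda>(p, k). (rotate k p, k)) ((\<lambda>(q, k). (rotate (N - k) q, k)) a') = a'"
      using len by (auto simp: rotate_rotate)
    show "(\<lambda>(p, k). (rotate k p, k)) ` T \<subseteq> {q \<in> S. P q} \<times> {..<N}"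
      unfolding T_def using clo by auto
    show "(\<lambda>(q, k). (rotate (N - k) q, k)) ` ({q \<in> S. P q} \<times> {..<N}) \<subseteq> T"
      unfolding T_def using clo len by (auto simp: rotate_rotate)
  qed
  hence "card T = card ({q\<in>S. P q} \<times> {..<N})" by (rule bij_betw_same_card)
  thus ?thesis using cT by (simp add: card_cartesian_product)
qed


lemma rot_eq: "k < length p \<Longrightarrow> rotate k p = drop k p @ take k p"
  by (simp add: rotate_drop_take)

lemma height_0[simp]: "height p 0 = 0" by (simp add: height_def)

lemma height_rot:
  assumes "k < length p" "j \<le> length p"
  shows "height (rotate k p) j = (if k + j < length p then height p (k+j) - height p k
          else height p (k + j - length p) + height p (length p) - height p k)"
proof -
  let ?N = "length p"
  have tk: "take (k+j) p = take k p @ take j (drop k p)" by (simp add: take_add)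
  have all: "sum_list (map step_val (take k p)) + sum_list (map step_val (drop k p)) = height p ?N"
    unfolding height_def by (metis append_take_drop_id map_append sum_list_append take_all order_refl)
  show ?thesis
  proof (cases "k + j < ?N")
    case True
    hence "take j (rotate k p) = take j (drop k p)" using assms by (simp add: rot_eq)
    thus ?thesis using True unfolding height_def tk by simp
  next
    case False
    have e1: "j - (?N - k) = k + j - ?N" using False assms by simp
    have "take j (rotate k p) = drop k p @ take (j - (?N - k)) (take k p)" using assms False
      by (simp add: rot_eq)
    also have "take (j - (?N - k)) (take k p) = take (k + j - ?N) p" unfolding e1 using assms
      by (simp only: take_take min_absorb1)
    finally show ?thesis using False all unfolding height_def by simp
  qed
qed

lemma nth_rot:
  assumes "k < length p" "j < length p"
  shows "rotate k p ! j = (if k + j < length p then p ! (k+j) else p ! (k + j - length p))"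
  using assms by (auto simp: rot_eq nth_append add.commute)

definition sg :: "nat \<Rightarrow> nat \<Rightarrow> nat \<Rightarrow> nat" where
  "sg N k j = (if k + j < N then k + j else k + j - N)"

lemma verts_below_rot:
  assumes k: "k < length p" and e: "height p (length p) = 1"
  shows "verts_below (rotate k p) = card {m. m < length p \<and> prec (height p) m k}"
proof -
  let ?N = "length p" let ?h = "height p"
  have key: "height (rotate k p) j \<le> 0 \<longleftrightarrow> prec ?h (sg ?N k j) k" if "1 \<le> j" "j \<le> ?N" for j
    using that height_rot[OF k, of j] e k unfolding prec_def sg_def by auto
  have "bij_betw (sg ?N k) {j. 1 \<le> j \<and> j \<le> ?N \<and> height (rotate k p) j \<le> 0}
          {m. m < ?N \<and> prec ?h m k}"
  proof (rule bij_betw_byWitness[where f' = "\<lambda>m. if k < m then m - k else m + ?N - k"])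
    show "\<forall>a\<in>{j. 1 \<le> j \<and> j \<le> ?N \<and> height (rotate k p) j \<le> 0}.
            (if k < sg ?N k a then sg ?N k a - k else sg ?N k a + ?N - k) = a"
      using k by (auto simp: sg_def)
    show "\<forall>a'\<in>{m. m < ?N \<and> prec ?h m k}. sg ?N k (if k < a' then a' - k else a' + ?N - k) = a'"
      using k by (auto simp: sg_def prec_def)
    show "sg ?N k ` {j. 1 \<le> j \<and> j \<le> ?N \<and> height (rotate k p) j \<le> 0} \<subseteq> {m. m < ?N \<and> prec ?h m k}"
      using key k by (auto simp: sg_def)
    show "(\<lambda>m. if k < m then m - k else m + ?N - k) ` {m. m < ?N \<and> prec ?h m k}
           \<subseteq> {j. 1 \<le> j \<and> j \<le> ?N \<and> height (rotate k p) j \<le> 0}"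
    proof
      fix j assume "j \<in> (\<lambda>m. if k < m then m - k else m + ?N - k) ` {m. m < ?N \<and> prec ?h m k}"
      then obtain m where m: "m < ?N" "prec ?h m k" "j = (if k < m then m - k else m + ?N - k)" by auto
      have mk: "m \<noteq> k" using m(2) by (auto simp: prec_def)
      have j: "1 \<le> j" "j \<le> ?N" using m k mk by auto
      have "sg ?N k j = m" using m k mk by (auto simp: sg_def)
      thus "j \<in> {j. 1 \<le> j \<and> j \<le> ?N \<and> height (rotate k p) j \<le> 0}" using key[OF j] m j by auto
    qed
  qed
  thus ?thesis unfolding verts_below_def using k by (simp add: bij_betw_same_card)
qed

lemma steps_below_rot:
  assumes k: "k < length p" and e: "height p (length p) = 1"
  shows "card {j. j < length p \<and> rotate k p ! j = b \<and> height (rotate k p) j \<le> 0}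
       = card {m. m < length p \<and> p ! m = b \<and> (m = k \<or> prec (height p) m k)}"
proof -
  let ?N = "length p" let ?h = "height p"
  have key: "height (rotate k p) j \<le> 0 \<longleftrightarrow> (sg ?N k j = k \<or> prec ?h (sg ?N k j) k)" if "j < ?N" for j
    using that height_rot[OF k, of j] e k unfolding prec_def sg_def by auto
  have key2: "rotate k p ! j = p ! (sg ?N k j)" if "j < ?N" for j
    using nth_rot[OF k that] by (simp add: sg_def)
  have "bij_betw (sg ?N k) {j. j < ?N \<and> rotate k p ! j = b \<and> height (rotate k p) j \<le> 0}
          {m. m < ?N \<and> p ! m = b \<and> (m = k \<or> prec ?h m k)}"
  proof (rule bij_betw_byWitness[where f' = "\<lambda>m. if k \<le> m then m - k else m + ?N - k"])
    show "\<forall>a\<in>{j. j < ?N \<and> rotate k p ! j = b \<and> height (rotate k p) j \<le> 0}.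
            (if k \<le> sg ?N k a then sg ?N k a - k else sg ?N k a + ?N - k) = a"
      using k by (auto simp: sg_def)
    show "\<forall>a'\<in>{m. m < ?N \<and> p ! m = b \<and> (m = k \<or> prec ?h m k)}. sg ?N k (if k \<le> a' then a' - k else a' + ?N - k) = a'"
      using k by (auto simp: sg_def)
    show "sg ?N k ` {j. j < ?N \<and> rotate k p ! j = b \<and> height (rotate k p) j \<le> 0}
          \<subseteq> {m. m < ?N \<and> p ! m = b \<and> (m = k \<or> prec ?h m k)}"
    proof
      fix m assume "m \<in> sg ?N k ` {j. j < ?N \<and> rotate k p ! j = b \<and> height (rotate k p) j \<le> 0}"
      then obtain j where j: "j < ?N" "rotate k p ! j = b" "height (rotate k p) j \<le> 0" "m = sg ?N k j" by auto
      have "m < ?N" using j k by (auto simp: sg_def)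
      thus "m \<in> {m. m < ?N \<and> p ! m = b \<and> (m = k \<or> prec ?h m k)}" using j key key2 by auto
    qed
    show "(\<lambda>m. if k \<le> m then m - k else m + ?N - k) ` {m. m < ?N \<and> p ! m = b \<and> (m = k \<or> prec ?h m k)}
           \<subseteq> {j. j < ?N \<and> rotate k p ! j = b \<and> height (rotate k p) j \<le> 0}"
    proof
      fix j assume "j \<in> (\<lambda>m. if k \<le> m then m - k else m + ?N - k) ` {m. m < ?N \<and> p ! m = b \<and> (m = k \<or> prec ?h m k)}"
      then obtain m where m: "m < ?N" "p ! m = b" "m = k \<or> prec ?h m k" "j = (if k \<le> m then m - k else m + ?N - k)" by auto
      have j: "j < ?N" using m k by auto
      have "sg ?N k j = m" using m k by (auto simp: sg_def)
      thus "j \<in> {j. j < ?N \<and> rotate k p ! j = b \<and> height (rotate k p) j \<le> 0}" using key[OF j] key2[OF j] m j by auto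
    qed
  qed
  thus ?thesis using k by (simp add: bij_betw_same_card)
qed


lemma sum_steps: "sum_list (map step_val p) = 2 * int (length (filter id p)) - int (length p)"
  by (induction p) (auto simp: step_val_def)

abbreviation ups where "ups p \<equiv> {k. k < length p \<and> p ! k}"

lemma height_end: "height p (length p) = 2 * int (card (ups p)) - int (length p)"
  unfolding height_def using sum_steps[of p] by (simp add: length_filter_conv_card)

lemma LP_iff: "p \<in> lattice_paths n \<longleftrightarrow> length p = 2*n+1 \<and> card (ups p) = n + 1"
  unfolding lattice_paths_def using height_end[of p] by auto

lemma card_downs: "card {k. k < length p \<and> \<not> p ! k} = length p - card (ups p)"
proof -
  have "{k. k < length p \<and> \<not> p ! k} = {..<length p} - ups p" by auto
  thus ?thesis by (simp add: card_Diff_subset subset_eq)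
qed

lemma ub_ua: "ups_below p + ups_above p = card (ups p)"
proof -
  have "ups p = {k. k < length p \<and> p ! k \<and> height p k \<le> 0} \<union> {k. k < length p \<and> p ! k \<and> height p k > 0}" by auto
  moreover have "card ({k. k < length p \<and> p ! k \<and> height p k \<le> 0} \<union> {k. k < length p \<and> p ! k \<and> height p k > 0})
     = card {k. k < length p \<and> p ! k \<and> height p k \<le> 0} + card {k. k < length p \<and> p ! k \<and> height p k > 0}"
    by (rule card_Un_disjoint) auto
  ultimately show ?thesis unfolding ups_below_def ups_above_def by simp
qed

lemma db_da: "downs_below p + downs_above p = card {k. k < length p \<and> \<not> p ! k}"
proof -
  have "{k. k < length p \<and> \<not> p ! k} = {k. k < length p \<and> \<not> p ! k \<and> height p k \<le> 0} \<union> {k. k < length p \<and> \<not> p ! k \<and> height p k > 0}" by auto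
  moreover have "card ({k. k < length p \<and> \<not> p ! k \<and> height p k \<le> 0} \<union> {k. k < length p \<and> \<not> p ! k \<and> height p k > 0})
     = card {k. k < length p \<and> \<not> p ! k \<and> height p k \<le> 0} + card {k. k < length p \<and> \<not> p ! k \<and> height p k > 0}"
    by (rule card_Un_disjoint) auto
  ultimately show ?thesis unfolding downs_below_def downs_above_def by simp
qed

lemma vb_va: "verts_below p + verts_above p = length p"
proof -
  have "{1..length p} = {k. 1 \<le> k \<and> k \<le> length p \<and> height p k \<le> 0} \<union> {k. 1 \<le> k \<and> k \<le> length p \<and> height p k > 0}" by auto
  hence "length p = card ({k. 1 \<le> k \<and> k \<le> length p \<and> height p k \<le> 0} \<union> {k. 1 \<le> k \<and> k \<le> length p \<and> height p k > 0})"
    by (metis card_atLeastAtMost diff_Suc_1)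
  moreover have "card ({k. 1 \<le> k \<and> k \<le> length p \<and> height p k \<le> 0} \<union> {k. 1 \<le> k \<and> k \<le> length p \<and> height p k > 0})
     = card {k. 1 \<le> k \<and> k \<le> length p \<and> height p k \<le> 0} + card {k. 1 \<le> k \<and> k \<le> length p \<and> height p k > 0}"
    by (rule card_Un_disjoint) auto
  ultimately show ?thesis unfolding verts_below_def verts_above_def by simp
qed

lemma card_LP: "card (lattice_paths n) = (2*n+1) choose (n+1)"
proof -
  let ?N = "2*n+1"
  have "bij_betw ups (lattice_paths n) {B. B \<subseteq> {..<?N} \<and> card B = n+1}"
  proof (rule bij_betw_byWitness[where f' = "\<lambda>B. map (\<lambda>k. k \<in> B) [0..<?N]"])
    show "\<forall>a\<in>lattice_paths n. map (\<lambda>k. k \<in> ups a) [0..<?N] = a"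
      by (auto simp: LP_iff simp del: upt_Suc intro!: nth_equalityI)
    show "\<forall>a'\<in>{B. B \<subseteq> {..<?N} \<and> card B = n + 1}. ups (map (\<lambda>k. k \<in> a') [0..<?N]) = a'"
      by (auto simp del: upt_Suc)
    show "ups ` lattice_paths n \<subseteq> {B. B \<subseteq> {..<?N} \<and> card B = n + 1}"
      by (auto simp: LP_iff)
    show "(\<lambda>B. map (\<lambda>k. k \<in> B) [0..<?N]) ` {B. B \<subseteq> {..<?N} \<and> card B = n + 1} \<subseteq> lattice_paths n"
    proof
      fix p assume "p \<in> (\<lambda>B. map (\<lambda>k. k \<in> B) [0..<?N]) ` {B. B \<subseteq> {..<?N} \<and> card B = n + 1}"
      then obtain B where B: "B \<subseteq> {..<?N}" "card B = n+1" "p = map (\<lambda>k. k \<in> B) [0..<?N]" by auto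
      have "ups p = B" using B by (auto simp del: upt_Suc)
      thus "p \<in> lattice_paths n" using B by (simp add: LP_iff)
    qed
  qed
  hence "card (lattice_paths n) = card {B. B \<subseteq> {..<?N} \<and> card B = n+1}" by (rule bij_betw_same_card)
  also have "\<dots> = ?N choose (n+1)" using n_subsets[of "{..<?N}" "n+1"] by simp
  finally show ?thesis .
qed

lemma LP_finite: "finite (lattice_paths n)"
proof -
  have "lattice_paths n \<subseteq> {p. set p \<subseteq> UNIV \<and> length p = 2*n+1}" by (auto simp: lattice_paths_def)
  thus ?thesis using finite_lists_length_eq[of "UNIV :: bool set" "2*n+1"] finite_subset by auto
qed

lemma LP_rot: assumes "p \<in> lattice_paths n" shows "rotate k p \<in> lattice_paths n"
proof -
  have N: "length p = 2*n+1" "height p (length p) = 1" using assms by (auto simp: lattice_paths_def)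
  have km: "k mod length p < length p" using N by simp
  have "height (rotate (k mod length p) p) (length p) = 1"
    using height_rot[OF km, of "length p"] N km by auto
  moreover have "rotate k p = rotate (k mod length p) p" by (rule rotate_conv_mod)
  ultimately show ?thesis using N by (simp add: lattice_paths_def)
qed


lemma cat_from: assumes "card (lattice_paths n) = (2*n+1) * X" shows "X = catalan n"
proof -
  have b: "Suc (2*n) * (2*n choose n) = (Suc (2*n) choose Suc n) * Suc n"
    by (rule Suc_times_binomial_eq)
  have c: "(Suc (2*n) choose Suc n) = Suc (2*n) * X"
    using assms card_LP[of n] by (simp del: binomial_Suc_Suc)
  have "Suc (2*n) * (2*n choose n) = Suc (2*n) * (X * Suc n)"
    using b unfolding c by (simp only: mult.assoc)
  hence "2*n choose n = X * Suc n" by (metis Zero_not_Suc mult_cancel_left)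
  hence "(2*n choose n) div (n+1) = X" by (metis Suc_eq_plus1 div_mult_self_is_m zero_less_Suc)
  thus ?thesis unfolding catalan_def by simp
qed

lemma count_h:
  assumes "i < 2*n+1"
  shows "card {q\<in>lattice_paths n. verts_below q = i} = catalan n"
proof (rule cat_from, rule double_count)
  show "finite (lattice_paths n)" by (rule LP_finite)
  show "\<And>p. p \<in> lattice_paths n \<Longrightarrow> length p = 2*n+1" by (simp add: LP_iff)
  show "\<And>p k. p \<in> lattice_paths n \<Longrightarrow> rotate k p \<in> lattice_paths n" by (rule LP_rot)
  fix p assume p: "p \<in> lattice_paths n"
  have N: "length p = 2*n+1" "height p (length p) = 1" using p by (auto simp: lattice_paths_def)
  let ?r = "\<lambda>k. card {m\<in>{..<2*n+1}. prec (height p) m k}"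
  have "{k. k < 2*n+1 \<and> verts_below (rotate k p) = i} = {k\<in>{..<2*n+1}. ?r k = i}"
    using verts_below_rot[of _ p] N by auto
  also have "card \<dots> = 1" using card_fiber_one[OF rank_bij[of "{..<2*n+1}" "height p"]] assms by simp
  finally show "card {k. k < 2*n+1 \<and> verts_below (rotate k p) = i} = 1" .
qed simp

lemma count_f:
  assumes "i \<le> n"
  shows "card {q\<in>lattice_paths n. hd q \<and> ups_below q = Suc i} = catalan n"
proof (rule cat_from, rule double_count)
  show "finite (lattice_paths n)" by (rule LP_finite)
  show "\<And>p. p \<in> lattice_paths n \<Longrightarrow> length p = 2*n+1" by (simp add: LP_iff)
  show "\<And>p k. p \<in> lattice_paths n \<Longrightarrow> rotate k p \<in> lattice_paths n" by (rule LP_rot)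
  fix p assume p: "p \<in> lattice_paths n"
  have N: "length p = 2*n+1" "height p (length p) = 1" "card (ups p) = n+1"
    using p LP_iff[of p n] by (auto simp: lattice_paths_def)
  let ?r = "\<lambda>k. card {m\<in>ups p. prec (height p) m k}"
  have hd: "hd (rotate k p) = p ! k" if "k < 2*n+1" for k
  proof -
    have ne: "rotate k p \<noteq> []"
    proof
      assume "rotate k p = []" hence "length (rotate k p) = 0" by (simp only: list.size)
      thus False using N by simp
    qed
    have "hd (rotate k p) = rotate k p ! 0" using ne by (rule hd_conv_nth)
    thus ?thesis using nth_rot[of k p 0] N that by simp
  qed
  have ub: "ups_below (rotate k p) = Suc (?r k)" if "k < 2*n+1" "p ! k" for k
  proof -
    have "ups_below (rotate k p) = card {m. m < length p \<and> p ! m = True \<and> (m = k \<or> prec (height p) m k)}"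
      using steps_below_rot[of k p True] N that unfolding ups_below_def by simp
    also have "{m. m < length p \<and> p ! m = True \<and> (m = k \<or> prec (height p) m k)}
         = insert k {m\<in>ups p. prec (height p) m k}" using that N by auto
    also have "card \<dots> = Suc (?r k)" by (subst card_insert_disjoint) (auto simp: prec_def)
    finally show ?thesis .
  qed
  have "{k. k < 2*n+1 \<and> (hd (rotate k p) \<and> ups_below (rotate k p) = Suc i)} = {k\<in>ups p. ?r k = i}"
    using hd ub N by auto
  also have "card \<dots> = 1" using card_fiber_one[OF rank_bij[of "ups p" "height p"]] assms N by simp
  finally show "card {k. k < 2*n+1 \<and> (hd (rotate k p) \<and> ups_below (rotate k p) = Suc i)} = 1" .
qed simp

lemma count_g:
  assumes "i < n"
  shows "card {q\<in>lattice_paths n. \<not> hd q \<and> downs_below q = Suc i} = catalan n"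
proof (rule cat_from, rule double_count)
  show "finite (lattice_paths n)" by (rule LP_finite)
  show "\<And>p. p \<in> lattice_paths n \<Longrightarrow> length p = 2*n+1" by (simp add: LP_iff)
  show "\<And>p k. p \<in> lattice_paths n \<Longrightarrow> rotate k p \<in> lattice_paths n" by (rule LP_rot)
  fix p assume p: "p \<in> lattice_paths n"
  have N: "length p = 2*n+1" "height p (length p) = 1" "card (ups p) = n+1"
    using p LP_iff[of p n] by (auto simp: lattice_paths_def)
  let ?D = "{k. k < length p \<and> \<not> p ! k}"
  have cD: "card ?D = n" using card_downs[of p] N by simp
  let ?r = "\<lambda>k. card {m\<in>?D. prec (height p) m k}"
  have hd: "hd (rotate k p) = p ! k" if "k < 2*n+1" for k
  proof -
    have ne: "rotate k p \<noteq> []"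
    proof
      assume "rotate k p = []" hence "length (rotate k p) = 0" by (simp only: list.size)
      thus False using N by simp
    qed
    have "hd (rotate k p) = rotate k p ! 0" using ne by (rule hd_conv_nth)
    thus ?thesis using nth_rot[of k p 0] N that by simp
  qed
  have db: "downs_below (rotate k p) = Suc (?r k)" if "k < 2*n+1" "\<not> p ! k" for k
  proof -
    have "downs_below (rotate k p) = card {m. m < length p \<and> p ! m = False \<and> (m = k \<or> prec (height p) m k)}"
      using steps_below_rot[of k p False] N that unfolding downs_below_def by simp
    also have "{m. m < length p \<and> p ! m = False \<and> (m = k \<or> prec (height p) m k)}
         = insert k {m\<in>?D. prec (height p) m k}" using that N by auto
    also have "card \<dots> = Suc (?r k)" by (subst card_insert_disjoint) (auto simp: prec_def)
    finally show ?thesis .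
  qed
  have "{k. k < 2*n+1 \<and> (\<not> hd (rotate k p) \<and> downs_below (rotate k p) = Suc i)} = {k\<in>?D. ?r k = i}"
    using hd db N by auto
  also have "card \<dots> = 1" using card_fiber_one[OF rank_bij[of "?D" "height p"]] assms cD by simp
  finally show "card {k. k < 2*n+1 \<and> (\<not> hd (rotate k p) \<and> downs_below (rotate k p) = Suc i)} = 1" .
qed simp


lemma coeff_f_eq: "coeff_f i j = catalan (i + j)"
proof -
  have "{p. (\<exists>n. p \<in> lattice_paths n) \<and> hd p \<and> ups_below p = Suc i \<and> ups_above p = j}
      = {q\<in>lattice_paths (i+j). hd q \<and> ups_below q = Suc i}"
  proof (intro set_eqI iffI)
    fix p assume "p \<in> {p. (\<exists>n. p \<in> lattice_paths n) \<and> hd p \<and> ups_below p = Suc i \<and> ups_above p = j}"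
    then obtain n where p: "p \<in> lattice_paths n" "hd p" "ups_below p = Suc i" "ups_above p = j" by auto
    have c: "card (ups p) = n+1" using LP_iff[of p n] p(1) by blast
    have "ups_below p + ups_above p = n+1" using ub_ua[of p] c by (simp only:)
    hence "n = i + j" using p by simp
    thus "p \<in> {q\<in>lattice_paths (i+j). hd q \<and> ups_below q = Suc i}" using p by simp
  next
    fix p assume p: "p \<in> {q\<in>lattice_paths (i+j). hd q \<and> ups_below q = Suc i}"
    have c: "card (ups p) = i+j+1" using LP_iff[of p "i+j"] p by blast
    have "ups_below p + ups_above p = i+j+1" using ub_ua[of p] c by (simp only:)
    hence "ups_above p = j" using p by simp
    thus "p \<in> {p. (\<exists>n. p \<in> lattice_paths n) \<and> hd p \<and> ups_below p = Suc i \<and> ups_above p = j}" using p by auto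
  qed
  thus ?thesis unfolding coeff_f_def using count_f[of i "i+j"] by simp
qed

lemma coeff_g_eq: "coeff_g i j = catalan (i + j + 1)"
proof -
  have "{p. (\<exists>n. p \<in> lattice_paths n) \<and> \<not> hd p \<and> downs_below p = Suc i \<and> downs_above p = j}
      = {q\<in>lattice_paths (i+j+1). \<not> hd q \<and> downs_below q = Suc i}"
  proof (intro set_eqI iffI)
    fix p assume "p \<in> {p. (\<exists>n. p \<in> lattice_paths n) \<and> \<not> hd p \<and> downs_below p = Suc i \<and> downs_above p = j}"
    then obtain n where p: "p \<in> lattice_paths n" "\<not> hd p" "downs_below p = Suc i" "downs_above p = j" by auto
    have c: "card (ups p) = n+1" "length p = 2*n+1" using LP_iff[of p n] p(1) by blast+
    have "downs_below p + downs_above p = length p - card (ups p)" using db_da[of p] card_downs[of p] by (simp only:)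
    hence "n = i + j + 1" using p c by simp
    thus "p \<in> {q\<in>lattice_paths (i+j+1). \<not> hd q \<and> downs_below q = Suc i}" using p by simp
  next
    fix p assume p: "p \<in> {q\<in>lattice_paths (i+j+1). \<not> hd q \<and> downs_below q = Suc i}"
    have c: "card (ups p) = i+j+1+1" "length p = 2*(i+j+1)+1" using LP_iff[of p "i+j+1"] p by blast+
    have "downs_below p + downs_above p = length p - card (ups p)" using db_da[of p] card_downs[of p] by (simp only:)
    hence "downs_above p = j" using p c by simp
    thus "p \<in> {p. (\<exists>n. p \<in> lattice_paths n) \<and> \<not> hd p \<and> downs_below p = Suc i \<and> downs_above p = j}" using p by auto
  qed
  thus ?thesis unfolding coeff_g_def using count_g[of i "i+j+1"] by simp
qed

lemma coeff_h_eq: "coeff_h i j = (if even (i + j) then catalan ((i + j) div 2) else 0)"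
proof -
  have len: "p \<in> lattice_paths n \<Longrightarrow> verts_below p = i \<Longrightarrow> verts_above p = Suc j \<Longrightarrow> i + j = 2 * n" for p n
    using vb_va[of p] LP_iff[of p n] by simp
  show ?thesis
  proof (cases "even (i + j)")
    case False
    have "{p. (\<exists>n. p \<in> lattice_paths n) \<and> verts_below p = i \<and> verts_above p = Suc j} = {}"
      using len False by fastforce
    thus ?thesis unfolding coeff_h_def using False by (simp only: card.empty if_False)
  next
    case True
    define n where "n = (i + j) div 2"
    have ij: "i + j = 2 * n" using True n_def by simp
    have "{p. (\<exists>n. p \<in> lattice_paths n) \<and> verts_below p = i \<and> verts_above p = Suc j}
        = {q\<in>lattice_paths n. verts_below q = i}"
    proof (intro set_eqI iffI)
      fix p assume "p \<in> {p. (\<exists>n. p \<in> lattice_paths n) \<and> verts_below p = i \<and> verts_above p = Suc j}"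
      then obtain m where p: "p \<in> lattice_paths m" "verts_below p = i" "verts_above p = Suc j" by auto
      have "m = n" using len[OF p] ij by simp
      thus "p \<in> {q\<in>lattice_paths n. verts_below q = i}" using p by simp
    next
      fix p assume p: "p \<in> {q\<in>lattice_paths n. verts_below q = i}"
      hence "verts_above p = Suc j" using vb_va[of p] LP_iff[of p n] ij by simp
      thus "p \<in> {p. (\<exists>n. p \<in> lattice_paths n) \<and> verts_below p = i \<and> verts_above p = Suc j}" using p by auto
    qed
    moreover have "card {q\<in>lattice_paths n. verts_below q = i} = catalan n" using ij by (intro count_h) simp
    ultimately show ?thesis unfolding coeff_h_def using True n_def by simp
  qed
qed

theorem theorem10:
  shows "(\<forall>i j. coeff_f i j = catalan (i + j))
       \<and> (\<forall>i j. coeff_g i j = catalan (i + j + 1))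
       \<and> (\<forall>i j. coeff_h i j = (if even (i + j) then catalan ((i + j) div 2) else 0))"
  using coeff_f_eq coeff_g_eq coeff_h_eq by blast

end
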